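(* Let $f,g\in\mathbb B(X)$ with $f$ modular in $g$, let $\mathbf u$ be an assignment over $X$ and $x\in\mathrm{dep}(g)$. Then $$\mathrm{mscs}^{\mathbf u}_x(f)=\mathrm{mscs}^{\mathbf u}_x(g)+\mathrm{mscs}^{\mathbf u}_g(f).$$
   Context: $X$ is a fixed finite set of variables; $\mathbb B(X)$ is the set of Boolean functions $\{0,1\}^X\to\{0,1\}$. For $\mathbf u\in\{0,1\}^X$ and $S\subseteq X$, $\mathbf u^{\oplus S}$ flips the values of the variables in $S$. $f_{x/c}$ is $f$ with $x$ fixed to $c$; $\mathrm{dep}(f)=\{x:f_{x/1}\ne f_{x/0}\}$; $f[x/s]=sf_{x/1}\lor\overline sf_{x/0}$; $\mathrm D_xf=f_{x/1}\oplus f_{x/0}$. Modularity: $f$ is modular in $g$ if $g$ is not constant and there are $\ell\in\mathbb B(X)$, $z\in X$ with $\mathrm{dep}(\ell)\cap\mathrm{dep}(g)=\emptyset$ and $f=\ell[z/g]$; then $f_{g/1}:=\ell_{z/1}$, $f_{g/0}:=\ell_{z/0}$ (well defined) and $\mathrm D_gf:=f_{g/1}\oplus f_{g/0}$. $\mathrm{mscs}^{\mathbf u}_x(f)$ is the minimum of $|S|$ over $S\subseteq X\setminus\{x\}$ with $(\mathrm D_xf)(\mathbf u^{\oplus S})=1$ (equivalently $f(\mathbf u^{\oplus S})\ne f(\mathbf u^{\oplus(S\cup\{x\})})$), and $\mathrm{mscs}^{\mathbf u}_g(f)$ is the minimum of $|S|$ over $S\subseteq X$ with $(\mathrm D_gf)(\mathbf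 u^{\oplus S})=1$; each is $\infty$ if no such set exists (with $\infty+k=\infty$). *)

theory Defs
  imports Main "HOL-Library.Extended_Nat"
begin

text \<open>Variables form a finite type 'v (the fixed finite set X); assignments are
  'v \<Rightarrow> bool; Boolean functions are ('v \<Rightarrow> bool) \<Rightarrow> bool.\<close>

type_synonym 'v assignment = "'v \<Rightarrow> bool"
type_synonym 'v bfun = "'v assignment \<Rightarrow> bool"

definition flip :: "'v assignment \<Rightarrow> 'v set \<Rightarrow> 'v assignment" where
  "flip u S = (\<lambda>y. if y \<in> S then \<not> u y else u y)"

definition restr :: "'v bfun \<Rightarrow> 'v \<Rightarrow> bool \<Rightarrow> 'v bfun" where
  "restr f x c = (\<lambda>u. f (u(x := c)))"

definition dep :: "'v bfun \<Rightarrow> 'v set" where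
  "dep f = {x. restr f x True \<noteq> restr f x False}"

definition subst :: "'v bfun \<Rightarrow> 'v \<Rightarrow> 'v bfun \<Rightarrow> 'v bfun" where
  "subst f x s = (\<lambda>u. (s u \<and> restr f x True u) \<or> (\<not> s u \<and> restr f x False u))"

definition deriv_var :: "'v bfun \<Rightarrow> 'v \<Rightarrow> 'v bfun" where
  "deriv_var f x = (\<lambda>u. restr f x True u \<noteq> restr f x False u)"

definition is_const :: "'v bfun \<Rightarrow> bool" where
  "is_const g \<longleftrightarrow> (\<exists>c. \<forall>u. g u = c)"

definition modular :: "'v bfun \<Rightarrow> 'v bfun \<Rightarrow> bool" where
  "modular f g \<longleftrightarrow> \<not> is_const g \<and>
     (\<exists>l z. dep l \<inter> dep g = {} \<and> f = subst l z g)"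

text \<open>f_{g/c} := l_{z/c} for any decomposition f = l[z/g] (well defined per the paper).\<close>
definition restr_fun :: "'v bfun \<Rightarrow> 'v bfun \<Rightarrow> bool \<Rightarrow> 'v bfun" where
  "restr_fun f g c = (THE h. \<exists>l z. dep l \<inter> dep g = {} \<and> f = subst l z g \<and> h = restr l z c)"

definition deriv_fun :: "'v bfun \<Rightarrow> 'v bfun \<Rightarrow> 'v bfun" where
  "deriv_fun f g = (\<lambda>u. restr_fun f g True u \<noteq> restr_fun f g False u)"

definition mscs_var :: "'v assignment \<Rightarrow> 'v \<Rightarrow> 'v bfun \<Rightarrow> enat" where
  "mscs_var u x f = Inf {enat (card S) | S. S \<subseteq> UNIV - {x} \<and> deriv_var f x (flip u S)}"

definition mscs_fun :: "'v assignment \<Rightarrow> 'v bfun \<Rightarrow> 'v bfun \<Rightarrow> enat" where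
  "mscs_fun u g f = Inf {enat (card S) | S. deriv_fun f g (flip u S)}"

end

theory Submission
  imports Defs
begin

lemma indep:
  assumes "y \<notin> dep h" shows "h (w(y:=c)) = h w"
proof -
  have "restr h y True = restr h y False" using assms unfolding dep_def by auto
  then have e: "h (w(y:=True)) = h (w(y:=False))" unfolding restr_def by metis
  show ?thesis
  proof (cases "c = w y")
    case True then show ?thesis by simp
  next
    case False
    then show ?thesis using e by (cases c) (metis (full_types) fun_upd_triv)+
  qed
qed

lemma local_aux:
  assumes "finite F"
  shows "\<forall>u. {y. u y \<noteq> v y} \<subseteq> F \<longrightarrow> (\<forall>y\<in>dep h. u y = v y) \<longrightarrow> h u = h v"
  using assms
proof (induction F rule: finite_induct)
  case empty
  show ?case
  proof (intro allI impI)
    fix u assume "{y. u y \<noteq> v y} \<subseteq> {}"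
    then have "u = v" by (auto simp: fun_eq_iff)
    then show "h u = h v" by simp
  qed
next
  case (insert a F)
  show ?case
  proof (intro allI impI)
    fix u assume d: "{y. u y \<noteq> v y} \<subseteq> insert a F" and dd: "\<forall>y\<in>dep h. u y = v y"
    define u' where "u' = u(a := v a)"
    have "{y. u' y \<noteq> v y} \<subseteq> F" using d unfolding u'_def by auto
    moreover have "\<forall>y\<in>dep h. u' y = v y" using dd unfolding u'_def by auto
    moreover have "{y. u' y \<noteq> v y} \<subseteq> F \<longrightarrow> (\<forall>y\<in>dep h. u' y = v y) \<longrightarrow> h u' = h v"
      using insert.IH by (rule spec)
    ultimately have h1: "h u' = h v" by blast
    show "h u = h v"
    proof (cases "a \<in> dep h")
      case True then have "u' = u" using dd unfolding u'_def by (auto simp: fun_eq_iff)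
      then show ?thesis using h1 by simp
    next
      case False
      have "h u' = h u" unfolding u'_def by (rule indep[OF False])
      then show ?thesis using h1 by simp
    qed
  qed
qed

lemma local_eq:
  fixes h :: "('v::finite) bfun"
  assumes "\<forall>y\<in>dep h. u y = v y" shows "h u = h v"
proof -
  have "finite (UNIV::'v set)" by simp
  from spec[OF local_aux[OF this, of v h], of u]
  have "{y. u y \<noteq> v y} \<subseteq> UNIV \<longrightarrow> (\<forall>y\<in>dep h. u y = v y) \<longrightarrow> h u = h v" .
  then show ?thesis using assms by (simp only: subset_UNIV simp_thms)
qed

lemma dep_restr: "dep (restr l z c) \<subseteq> dep l"
proof
  fix y assume y: "y \<in> dep (restr l z c)"
  show "y \<in> dep l"
  proof (rule ccontr)
    assume n: "y \<notin> dep l"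
    have "restr (restr l z c) y True = restr (restr l z c) y False"
    proof
      fix w
      show "restr (restr l z c) y True w = restr (restr l z c) y False w"
      proof (cases "y = z")
        case True then show ?thesis unfolding restr_def by simp
      next
        case False
        then have "w(y := True, z := c) = w(z := c, y := True)"
          "w(y := False, z := c) = w(z := c, y := False)" by (auto simp: fun_eq_iff)
        moreover have "l (w(z := c, y := True)) = l (w(z := c))"
          "l (w(z := c, y := False)) = l (w(z := c))" using indep[OF n] by blast+
        ultimately show ?thesis unfolding restr_def by simp
      qed
    qed
    then show False using y unfolding dep_def by auto
  qed
qed

lemma decomp_unique:
  fixes g l l' :: "('v::finite) bfun"
  assumes nc: "\<not> is_const g" and d1: "dep l \<inter> dep g = {}" and d2: "dep l' \<inter> dep g = {}"
    and e: "subst l z g = subst l' z' g"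
  shows "restr l z c w = restr l' z' c w"
proof -
  have "\<exists>a. g a = c"
  proof (rule ccontr)
    assume "\<not> (\<exists>a. g a = c)"
    then have "\<forall>a. g a = (\<not> c)" by auto
    then show False using nc unfolding is_const_def by blast
  qed
  then obtain a where ga: "g a = c" by blast
  define w1 where "w1 = (\<lambda>y. if y \<in> dep g then a y else w y)"
  have "g w1 = g a" by (rule local_eq[of g]) (simp add: w1_def)
  then have g1: "g w1 = c" using ga by simp
  have r1: "restr l z c w1 = restr l z c w"
  proof (rule local_eq[of "restr l z c"], rule ballI)
    fix y assume "y \<in> dep (restr l z c)"
    then have "y \<in> dep l" by (rule subsetD[OF dep_restr])
    then have "y \<notin> dep g" using d1 by blast
    then show "w1 y = w y" by (simp add: w1_def)
  qed
  have r2: "restr l' z' c w1 = restr l' z' c w"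
  proof (rule local_eq[of "restr l' z' c"], rule ballI)
    fix y assume "y \<in> dep (restr l' z' c)"
    then have "y \<in> dep l'" by (rule subsetD[OF dep_restr])
    then have "y \<notin> dep g" using d2 by blast
    then show "w1 y = w y" by (simp add: w1_def)
  qed
  have s1: "subst l z g w1 = restr l z c w1" using g1 by (cases c) (simp_all add: subst_def)
  have s2: "subst l' z' g w1 = restr l' z' c w1" using g1 by (cases c) (simp_all add: subst_def)
  have "subst l z g w1 = subst l' z' g w1" using e by (rule fun_cong)
  then show ?thesis using r1 r2 s1 s2 by simp
qed

lemma Inf_attained: "(A::enat set) \<noteq> {} \<Longrightarrow> Inf A \<in> A"
  unfolding Inf_enat_def by (auto intro: LeastI_ex)

lemma comb:
  fixes P Q :: "('v::finite) set \<Rightarrow> bool" and G :: "'v set"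
  assumes xG: "x \<in> G" and hP: "\<And>S. P S = P (S \<inter> G)" and hQ: "\<And>S. Q S = Q (S - G)"
  shows "Inf {enat (card S) | S. S \<subseteq> UNIV - {x} \<and> P S \<and> Q S}
       = Inf {enat (card S) | S. S \<subseteq> UNIV - {x} \<and> P S} + Inf {enat (card S) | S. Q S}"
    (is "Inf ?A = Inf ?B + Inf ?C")
proof (cases "?B \<noteq> {} \<and> ?C \<noteq> {}")
  case True
  obtain S1 where S1: "S1 \<subseteq> UNIV - {x}" "P S1" "Inf ?B = enat (card S1)"
    using Inf_attained[of ?B] True by auto
  obtain S2 where S2: "Q S2" "Inf ?C = enat (card S2)"
    using Inf_attained[of ?C] True by auto
  define T where "T = S1 \<inter> G \<union> (S2 - G)"
  have "T \<inter> G = S1 \<inter> G" "T - G = S2 - G" by (auto simp: T_def)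
  then have PT: "P T" and QT: "Q T" using hP[of T] hP[of S1] hQ[of T] hQ[of S2] S1 S2 by auto
  have Tx: "T \<subseteq> UNIV - {x}" using S1 xG by (auto simp: T_def)
  have "card T \<le> card (S1 \<inter> G) + card (S2 - G)" unfolding T_def by (rule card_Un_le)
  also have "\<dots> \<le> card S1 + card S2"
    by (intro add_mono card_mono) auto
  finally have cT: "enat (card T) \<le> Inf ?B + Inf ?C" using S1 S2 by simp
  have "Inf ?A \<le> enat (card T)" by (rule Inf_lower) (use PT QT Tx in blast)
  with cT have le1: "Inf ?A \<le> Inf ?B + Inf ?C" by simp
  have le2: "Inf ?B + Inf ?C \<le> Inf ?A"
  proof (rule Inf_greatest)
    fix m assume "m \<in> ?A"
    then obtain S where S: "S \<subseteq> UNIV - {x}" "P S" "Q S" "m = enat (card S)" by auto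
    have "Inf ?B \<le> enat (card (S \<inter> G))"
      by (rule Inf_lower) (use S hP[of S] in auto)
    moreover have "Inf ?C \<le> enat (card (S - G))"
      by (rule Inf_lower) (use S hQ[of S] in auto)
    moreover have "card S = card (S \<inter> G) + card (S - G)"
      by (metis card_Int_Diff finite)
    ultimately show "Inf ?B + Inf ?C \<le> m" using S(4) add_mono by fastforce
  qed
  show ?thesis using le1 le2 by simp
next
  case False
  then have "?A = {}" by auto
  then show ?thesis using False by (auto simp: Inf_enat_def)
qed

theorem mainTheorem19:
  fixes f g :: "('v::finite) bfun" and u :: "'v assignment" and x :: 'v
  assumes "modular f g"
    and "x \<in> dep g"
  shows "mscs_var u x f = mscs_var u x g + mscs_fun u g f"
proof -
  obtain l z where nc: "\<not> is_const g" and ld: "dep l \<inter> dep g = {}" and fd: "f = subst l z g"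
    using assms(1) unfolding modular_def by blast
  define L1 where "L1 = restr l z True"
  define L0 where "L0 = restr l z False"
  have feq: "\<And>w. f w = (g w \<and> L1 w \<or> \<not> g w \<and> L0 w)"
    unfolding fd subst_def L1_def L0_def by simp
  have rf: "\<And>c. restr_fun f g c = restr l z c"
    unfolding restr_fun_def
  proof (rule the_equality)
    fix c show "\<exists>la za. dep la \<inter> dep g = {} \<and> f = subst la za g \<and> restr l z c = restr la za c"
      using ld fd by blast
  next
    fix c h assume "\<exists>la za. dep la \<inter> dep g = {} \<and> f = subst la za g \<and> h = restr la za c"
    then obtain la za where d': "dep la \<inter> dep g = {}" and e': "f = subst la za g" and h: "h = restr la za c" by blast
    have "subst l z g = subst la za g" using fd e' by simp
    then show "h = restr l z c"
      using decomp_unique[OF nc ld d', of z za c] h by (auto simp: fun_eq_iff)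
  qed
  have df: "\<And>w. deriv_fun f g w = (L1 w \<noteq> L0 w)"
    unfolding deriv_fun_def rf L1_def L0_def by simp
  have xl: "x \<notin> dep l" using ld assms(2) by auto
  have x1: "x \<notin> dep L1" and x0: "x \<notin> dep L0"
    using xl subsetD[OF dep_restr[of l z True]] subsetD[OF dep_restr[of l z False]]
    unfolding L1_def L0_def by blast+
  have dv: "\<And>w. deriv_var f x w = (deriv_var g x w \<and> L1 w \<noteq> L0 w)"
    unfolding deriv_var_def restr_def using feq indep[OF x1] indep[OF x0] by auto
  let ?G = "dep g"
  have hP: "\<And>S. deriv_var g x (flip u S) = deriv_var g x (flip u (S \<inter> ?G))"
  proof -
    fix S
    have "\<And>c. g ((flip u S)(x := c)) = g ((flip u (S \<inter> ?G))(x := c))"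
      by (rule local_eq[of g]) (auto simp: flip_def)
    then show "deriv_var g x (flip u S) = deriv_var g x (flip u (S \<inter> ?G))"
      unfolding deriv_var_def restr_def by simp
  qed
  have hQ: "\<And>S. (L1 (flip u S) \<noteq> L0 (flip u S)) = (L1 (flip u (S - ?G)) \<noteq> L0 (flip u (S - ?G)))"
  proof -
    fix S
    have "L1 (flip u S) = L1 (flip u (S - ?G))"
    proof (rule local_eq[of L1], rule ballI)
      fix y assume "y \<in> dep L1"
      then have "y \<in> dep l" unfolding L1_def by (rule subsetD[OF dep_restr])
      then have "y \<notin> dep g" using ld by blast
      then show "flip u S y = flip u (S - ?G) y" by (simp add: flip_def)
    qed
    moreover have "L0 (flip u S) = L0 (flip u (S - ?G))"
    proof (rule local_eq[of L0], rule ballI)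
      fix y assume "y \<in> dep L0"
      then have "y \<in> dep l" unfolding L0_def by (rule subsetD[OF dep_restr])
      then have "y \<notin> dep g" using ld by blast
      then show "flip u S y = flip u (S - ?G) y" by (simp add: flip_def)
    qed
    ultimately show "?thesis S" by simp
  qed
  show ?thesis
    unfolding mscs_var_def mscs_fun_def dv df
    by (rule comb[OF assms(2)]) (use hP hQ in auto)
qed

end
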